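(* Let $\bar\mu,\sigma_1,\dots,\sigma_q>0$, $R_1\in\mathbb{S}^{n_1}_+,\dots,R_q\in\mathbb{S}^{n_q}_+$, $W\in\mathbb{S}^n_+$, and $Z,J\in\mathbb{R}^{m\times n}$. Define $L:=[ZW^{-1}\ \ J]\in\mathbb{R}^{m\times2n}$, $R(\tau):=\bigoplus_{i=1}^qR_ie^{\sigma_i\tau_i}$, $\widehat P(\tau):=W^{-1}\oplus R(\tau)$, $$\mathcal{L}:=\{\bar x\in\mathbb{R}^{2n}:\ |L_{(i)}\bar x|\le\bar u_i,\ i=1,\dots,m\},\qquad \mathcal{Q}_{\bar\mu}:=\{(\bar x,\tau)\in\mathbb{R}^{2n}\times\mathcal{T}:\ \bar x^{\mathsf T}\widehat P(\tau)\bar x\le\bar\mu\}.$$ Assume $$\begin{bmatrix}W&0&Z_{(i)}^{\mathsf T}\\ \star&\bigoplus_{j=1}^qR_j&J_{(i)}^{\mathsf T}\\ \star&\star&\frac{\bar u_i^2}{\bar\mu}\end{bmatrix}\succeq0\qquad\forall i\in\{1,\dots,m\}.$$ Then $\mathcal{Q}_{\bar\mu}\subset\mathcal{L}\times\mathcal{T}$.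
   Context: Integers $n,m\ge1$, $1\le q\le n$, $n_1,\dots,n_q\ge1$ with $\sum n_i=n$; $\bar u=(\bar u_1,\dots,\bar u_m)$ with $\bar u_i>0$; positive reals $T_2^{(1)},\dots,T_2^{(q)}$ and $\mathcal{T}=\prod_i[0,T_2^{(i)}]$. Notation: $\mathbb{S}^k_+$ symmetric positive definite $k\times k$ matrices; $\bigoplus$ block-diagonal direct sum; $\star$ symmetric blocks; $M_{(i)}$ the $i$-th row of $M$. *)

theory Defs
  imports "Jordan_Normal_Form.Matrix"
begin

definition psd_mat :: "real mat \<Rightarrow> bool" where
  "psd_mat M \<longleftrightarrow> square_mat M \<and> transpose_mat M = M \<and>
     (\<forall>x \<in> carrier_vec (dim_row M). x \<bullet> (M *\<^sub>v x) \<ge> 0)"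

definition pd_mat :: "nat \<Rightarrow> real mat \<Rightarrow> bool" where
  "pd_mat k M \<longleftrightarrow> M \<in> carrier_mat k k \<and> transpose_mat M = M \<and>
     (\<forall>x \<in> carrier_vec k. x \<noteq> 0\<^sub>v k \<longrightarrow> x \<bullet> (M *\<^sub>v x) > 0)"

definition mat_inv :: "real mat \<Rightarrow> real mat" where
  "mat_inv W = (THE B. B \<in> carrier_mat (dim_row W) (dim_row W) \<and> inverts_mat W B \<and> inverts_mat B W)"

definition Rsum :: "real mat list \<Rightarrow> real mat" where
  "Rsum Rs = diag_block_mat Rs"

definition Rtau :: "real mat list \<Rightarrow> (nat \<Rightarrow> real) \<Rightarrow> (nat \<Rightarrow> real) \<Rightarrow> real mat" where
  "Rtau Rs \<sigma> \<tau> = diag_block_mat (map (\<lambda>i. exp (\<sigma> i * \<tau> i) \<cdot>\<^sub>m (Rs ! i)) [0..<length Rs])"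

definition Phat :: "real mat \<Rightarrow> real mat list \<Rightarrow> (nat \<Rightarrow> real) \<Rightarrow> (nat \<Rightarrow> real) \<Rightarrow> real mat" where
  "Phat W Rs \<sigma> \<tau> = (let A = mat_inv W; B = Rtau Rs \<sigma> \<tau> in
     four_block_mat A (0\<^sub>m (dim_row A) (dim_col B)) (0\<^sub>m (dim_row B) (dim_col A)) B)"

text \<open>L = [Z W^{-1}  J] (horizontal concatenation, m x 2n).\<close>
definition Lmat :: "real mat \<Rightarrow> real mat \<Rightarrow> real mat \<Rightarrow> real mat" where
  "Lmat Z W J = four_block_mat (Z * mat_inv W) J (0\<^sub>m 0 (dim_row W)) (0\<^sub>m 0 (dim_col J))"

definition Lset :: "nat \<Rightarrow> nat \<Rightarrow> real mat \<Rightarrow> (nat \<Rightarrow> real) \<Rightarrow> real vec set" where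
  "Lset n m L u = {x \<in> carrier_vec (2*n). \<forall>i<m. \<bar>row L i \<bullet> x\<bar> \<le> u i}"

definition Tset :: "nat \<Rightarrow> (nat \<Rightarrow> real) \<Rightarrow> (nat \<Rightarrow> real) set" where
  "Tset q T2 = (\<Pi>\<^sub>E i\<in>{..<q}. {0..T2 i})"

definition Qset :: "nat \<Rightarrow> nat \<Rightarrow> (nat \<Rightarrow> real) \<Rightarrow> real mat \<Rightarrow> real mat list \<Rightarrow> (nat \<Rightarrow> real)
    \<Rightarrow> real \<Rightarrow> (real vec \<times> (nat \<Rightarrow> real)) set" where
  "Qset n q T2 W Rs \<sigma> \<mu> = {(x, \<tau>). x \<in> carrier_vec (2*n) \<and> \<tau> \<in> Tset q T2 \<and>
       x \<bullet> (Phat W Rs \<sigma> \<tau> *\<^sub>v x) \<le> \<mu>}"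

definition LMI_mat :: "real mat \<Rightarrow> real mat list \<Rightarrow> real mat \<Rightarrow> real mat \<Rightarrow> real \<Rightarrow> real \<Rightarrow> nat \<Rightarrow> real mat" where
  "LMI_mat W Rs Z J u \<mu> i = (let
      R = Rsum Rs;
      A = four_block_mat W (0\<^sub>m (dim_row W) (dim_col R)) (0\<^sub>m (dim_row R) (dim_col W)) R;
      v = row Z i @\<^sub>v row J i;
      B = mat (dim_vec v) 1 (\<lambda>(k, _). v $ k);
      C = mat 1 (dim_vec v) (\<lambda>(_, k). v $ k);
      D = mat 1 1 (\<lambda>_. u\<^sup>2 / \<mu>)
    in four_block_mat A B C D)"

end

theory Submission
  imports Defs "Jordan_Normal_Form.Determinant"
begin

lemma smult_mat_vec: "dim_vec x = dim_col A \<Longrightarrow> (c \<cdot>\<^sub>m (A::real mat)) *\<^sub>v x = c \<cdot>\<^sub>v (A *\<^sub>v x)"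
  by (intro eq_vecI) (auto simp: mult_mat_vec_def)

lemma quad_split:
  assumes A: "A \<in> carrier_mat k k" and D: "D \<in> carrier_mat l l" and x: "x \<in> carrier_vec (k+l)"
  shows "x \<bullet> (four_block_mat A (0\<^sub>m k l) (0\<^sub>m l k) D *\<^sub>v x) =
    vec_first x k \<bullet> (A *\<^sub>v vec_first x k) + vec_last x l \<bullet> (D *\<^sub>v vec_last x l)"
proof -
  define x1 where "x1 = vec_first x k"
  define x2 where "x2 = vec_last x l"
  have x1: "x1 \<in> carrier_vec k" and x2: "x2 \<in> carrier_vec l" unfolding x1_def x2_def by auto
  have xe: "x = x1 @\<^sub>v x2" using x unfolding x1_def x2_def by simp
  have mv: "four_block_mat A (0\<^sub>m k l) (0\<^sub>m l k) D *\<^sub>v x = A *\<^sub>v x1 @\<^sub>v D *\<^sub>v x2"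
    using mult_mat_vec_split[OF A D x1 x2] xe by simp
  have "x \<bullet> (four_block_mat A (0\<^sub>m k l) (0\<^sub>m l k) D *\<^sub>v x) = (x1 @\<^sub>v x2) \<bullet> (A *\<^sub>v x1 @\<^sub>v D *\<^sub>v x2)"
    by (metis xe mv)
  also have "\<dots> = x1 \<bullet> (A *\<^sub>v x1) + x2 \<bullet> (D *\<^sub>v x2)"
    by (rule scalar_prod_append[OF x1 x2]) (use A D x1 x2 in auto)
  finally show ?thesis unfolding x1_def x2_def .
qed

lemma diag_block_mono:
  fixes As Bs :: "real mat list"
  assumes "length As = length Bs"
    and "\<forall>i<length As. As!i \<in> carrier_mat (dim_row (As!i)) (dim_row (As!i)) \<and>
        Bs!i \<in> carrier_mat (dim_row (As!i)) (dim_row (As!i)) \<and>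
        (\<forall>x\<in>carrier_vec (dim_row (As!i)). x \<bullet> (As!i *\<^sub>v x) \<le> x \<bullet> (Bs!i *\<^sub>v x))"
  shows "diag_block_mat As \<in> carrier_mat (sum_list (map dim_row As)) (sum_list (map dim_row As))
    \<and> diag_block_mat Bs \<in> carrier_mat (sum_list (map dim_row As)) (sum_list (map dim_row As))
    \<and> (\<forall>x\<in>carrier_vec (sum_list (map dim_row As)).
         x \<bullet> (diag_block_mat As *\<^sub>v x) \<le> x \<bullet> (diag_block_mat Bs *\<^sub>v x))"
  using assms
proof (induction As Bs rule: list_induct2)
  case Nil
  then show ?case by auto
next
  case (Cons A As B Bs)
  let ?k = "dim_row A"
  let ?l = "sum_list (map dim_row As)"
  have IH: "diag_block_mat As \<in> carrier_mat ?l ?l \<and> diag_block_mat Bs \<in> carrier_mat ?l ?l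
    \<and> (\<forall>x\<in>carrier_vec ?l. x \<bullet> (diag_block_mat As *\<^sub>v x) \<le> x \<bullet> (diag_block_mat Bs *\<^sub>v x))"
  proof (rule Cons.IH, intro allI impI)
    fix i assume "i < length As"
    then show "As ! i \<in> carrier_mat (dim_row (As ! i)) (dim_row (As ! i)) \<and>
        Bs ! i \<in> carrier_mat (dim_row (As ! i)) (dim_row (As ! i)) \<and>
        (\<forall>x\<in>carrier_vec (dim_row (As ! i)). x \<bullet> (As ! i *\<^sub>v x) \<le> x \<bullet> (Bs ! i *\<^sub>v x))"
      using Cons.prems(1)[rule_format, of "Suc i"] by simp
  qed
  have h0: "A \<in> carrier_mat ?k ?k \<and> B \<in> carrier_mat ?k ?k \<and>
        (\<forall>x\<in>carrier_vec ?k. x \<bullet> (A *\<^sub>v x) \<le> x \<bullet> (B *\<^sub>v x))"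
    using Cons.prems(1)[rule_format, of 0] by simp
  have A: "A \<in> carrier_mat ?k ?k" using conjunct1[OF h0] .
  have B: "B \<in> carrier_mat ?k ?k" using conjunct1[OF conjunct2[OF h0]] .
  have hAB: "\<forall>x\<in>carrier_vec ?k. x \<bullet> (A *\<^sub>v x) \<le> x \<bullet> (B *\<^sub>v x)" using conjunct2[OF conjunct2[OF h0]] .
  have DA: "diag_block_mat As \<in> carrier_mat ?l ?l" using conjunct1[OF IH] .
  have DB: "diag_block_mat Bs \<in> carrier_mat ?l ?l" using conjunct1[OF conjunct2[OF IH]] .
  have hD: "\<forall>x\<in>carrier_vec ?l. x \<bullet> (diag_block_mat As *\<^sub>v x) \<le> x \<bullet> (diag_block_mat Bs *\<^sub>v x)"
    using conjunct2[OF conjunct2[OF IH]] .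
  have eA: "diag_block_mat (A#As) = four_block_mat A (0\<^sub>m ?k ?l) (0\<^sub>m ?l ?k) (diag_block_mat As)"
    using carrier_matD[OF A] carrier_matD[OF DA] by (simp only: diag_block_mat.simps Let_def)
  have eB: "diag_block_mat (B#Bs) = four_block_mat B (0\<^sub>m ?k ?l) (0\<^sub>m ?l ?k) (diag_block_mat Bs)"
    using carrier_matD[OF B] carrier_matD[OF DB] by (simp only: diag_block_mat.simps Let_def)
  have s: "sum_list (map dim_row (A#As)) = ?k + ?l" by simp
  show ?case
    unfolding s eA eB
  proof (intro conjI ballI)
    show "four_block_mat A (0\<^sub>m ?k ?l) (0\<^sub>m ?l ?k) (diag_block_mat As) \<in> carrier_mat (?k + ?l) (?k + ?l)"
      by (rule four_block_carrier_mat[OF A DA])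
    show "four_block_mat B (0\<^sub>m ?k ?l) (0\<^sub>m ?l ?k) (diag_block_mat Bs) \<in> carrier_mat (?k + ?l) (?k + ?l)"
      by (rule four_block_carrier_mat[OF B DB])
    fix x :: "real vec" assume x: "x \<in> carrier_vec (?k + ?l)"
    show "x \<bullet> (four_block_mat A (0\<^sub>m ?k ?l) (0\<^sub>m ?l ?k) (diag_block_mat As) *\<^sub>v x)
         \<le> x \<bullet> (four_block_mat B (0\<^sub>m ?k ?l) (0\<^sub>m ?l ?k) (diag_block_mat Bs) *\<^sub>v x)"
      unfolding quad_split[OF A DA x] quad_split[OF B DB x]
      by (intro add_mono hAB[rule_format] hD[rule_format]) simp_all
  qed
qed


lemma pd_inv:
  assumes "pd_mat n W"
  shows "mat_inv W \<in> carrier_mat n n \<and> W * mat_inv W = 1\<^sub>m n \<and> mat_inv W * W = 1\<^sub>m n"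
proof -
  have W: "W \<in> carrier_mat n n" using assms unfolding pd_mat_def by auto
  have "det W \<noteq> 0"
  proof
    assume "det W = 0"
    then obtain v where v: "v \<in> carrier_vec n" "v \<noteq> 0\<^sub>v n" "W *\<^sub>v v = 0\<^sub>v n"
      using det_0_iff_vec_prod_zero_field[OF W] by auto
    then have "v \<bullet> (W *\<^sub>v v) > 0" using assms unfolding pd_mat_def by auto
    then show False using v by simp
  qed
  from det_non_zero_imp_unit[OF W this, of "()"]
  obtain B where B: "B \<in> carrier_mat n n" "B * W = 1\<^sub>m n" "W * B = 1\<^sub>m n"
    unfolding Units_def ring_mat_def by auto
  have "mat_inv W = B"
    unfolding mat_inv_def
  proof (rule the_equality)
    show "B \<in> carrier_mat (dim_row W) (dim_row W) \<and> inverts_mat W B \<and> inverts_mat B W"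
      using B W unfolding inverts_mat_def by auto
    fix B' assume h: "B' \<in> carrier_mat (dim_row W) (dim_row W) \<and> inverts_mat W B' \<and> inverts_mat B' W"
    then have B': "B' \<in> carrier_mat n n" "B' * W = 1\<^sub>m n" using W unfolding inverts_mat_def by auto
    have "B' = B' * (W * B)" using B' B by (simp add: right_mult_one_mat[OF B'(1)])
    also have "\<dots> = (B' * W) * B" using assoc_mult_mat[OF B'(1) W B(1)] by simp
    also have "\<dots> = B" using B' B by (simp add: left_mult_one_mat[OF B(1)])
    finally show "B' = B" .
  qed
  then show ?thesis using B by simp
qed



lemma quad_bound:
  fixes c s u \<mu> :: real
  assumes "c \<le> \<mu>" "\<mu> > 0" "u > 0" "\<And>t. 0 \<le> c + 2*t*s + t*t*(u\<^sup>2/\<mu>)"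
  shows "\<bar>s\<bar> \<le> u"
proof -
  define t where "t = - s * \<mu> / u\<^sup>2"
  have "0 \<le> c + 2*t*s + t*t*(u\<^sup>2/\<mu>)" by (rule assms(4))
  also have "c + 2*t*s + t*t*(u\<^sup>2/\<mu>) = c - s\<^sup>2 * \<mu> / u\<^sup>2"
    unfolding t_def using assms(2,3) by (simp add: field_simps power2_eq_square)
  finally have "s\<^sup>2 * \<mu> / u\<^sup>2 \<le> c" by simp
  then have "s\<^sup>2 * \<mu> \<le> c * u\<^sup>2" using assms(3) by (simp add: field_simps)
  also have "\<dots> \<le> \<mu> * u\<^sup>2" using assms(1) by (simp add: mult_right_mono)
  finally have "s\<^sup>2 \<le> u\<^sup>2" using assms(2) by (simp add: mult.commute)
  then show ?thesis using abs_le_square_iff[of s u] assms(3) by simp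
qed

lemma lmi_quad:
  fixes W Z J :: "real mat"
  assumes W: "W \<in> carrier_mat n n" and R: "Rsum Rs \<in> carrier_mat n n"
    and Z: "Z \<in> carrier_mat m n" and J: "J \<in> carrier_mat m n" and i: "i < m"
    and a: "a \<in> carrier_vec n" and x2: "x2 \<in> carrier_vec n"
  shows "((a @\<^sub>v x2) @\<^sub>v vec 1 (\<lambda>_. t)) \<bullet> (LMI_mat W Rs Z J u \<mu> i *\<^sub>v ((a @\<^sub>v x2) @\<^sub>v vec 1 (\<lambda>_. t)))
    = a \<bullet> (W *\<^sub>v a) + x2 \<bullet> (Rsum Rs *\<^sub>v x2) + 2*t*(row Z i \<bullet> a + row J i \<bullet> x2) + t*t*(u\<^sup>2/\<mu>)"
proof -
  define v where "v = row Z i @\<^sub>v row J i"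
  define A where "A = four_block_mat W (0\<^sub>m n n) (0\<^sub>m n n) (Rsum Rs)"
  define B where "B = mat (2*n) 1 (\<lambda>(k, _). v $ k)"
  define C where "C = mat 1 (2*n) (\<lambda>(_, k). v $ k)"
  define D where "D = mat 1 1 (\<lambda>_. u\<^sup>2 / \<mu>)"
  define w where "w = a @\<^sub>v x2"
  define tv :: "real vec" where "tv = vec 1 (\<lambda>_. t)"
  have v: "v \<in> carrier_vec (n+n)" unfolding v_def using Z J i by auto
  have dv: "dim_vec v = 2*n" using v by simp
  have M: "LMI_mat W Rs Z J u \<mu> i = four_block_mat A B C D"
    unfolding LMI_mat_def Let_def A_def B_def C_def D_def v_def[symmetric] dv using W R by simp
  have A: "A \<in> carrier_mat (2*n) (2*n)" unfolding A_def using W R by auto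
  have Bc: "B \<in> carrier_mat (2*n) 1" and Cc: "C \<in> carrier_mat 1 (2*n)" and Dc: "D \<in> carrier_mat 1 1"
    unfolding B_def C_def D_def by auto
  have w: "w \<in> carrier_vec (2*n)" unfolding w_def mult_2 using a x2 by auto
  have tv: "tv \<in> carrier_vec 1" unfolding tv_def by auto
  have mv: "four_block_mat A B C D *\<^sub>v (w @\<^sub>v tv) = (A *\<^sub>v w + B *\<^sub>v tv) @\<^sub>v (C *\<^sub>v w + D *\<^sub>v tv)"
    by (rule four_block_mat_mult_vec[OF A Bc Cc Dc w tv])
  have Btv: "B *\<^sub>v tv = t \<cdot>\<^sub>v v"
    by (rule eq_vecI) (auto simp: B_def tv_def dv mult_mat_vec_def scalar_prod_def row_def)
  have Cw: "tv \<bullet> (C *\<^sub>v w) = t * (w \<bullet> v)"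
    using w dv by (auto simp: C_def tv_def mult_mat_vec_def scalar_prod_def row_def mult.commute)
  have Dtv: "tv \<bullet> (D *\<^sub>v tv) = t*t*(u\<^sup>2/\<mu>)"
    by (auto simp: D_def tv_def mult_mat_vec_def scalar_prod_def row_def)
  have Aw: "w \<bullet> (A *\<^sub>v w) = a \<bullet> (W *\<^sub>v a) + x2 \<bullet> (Rsum Rs *\<^sub>v x2)"
  proof -
    have "A *\<^sub>v w = W *\<^sub>v a @\<^sub>v Rsum Rs *\<^sub>v x2"
      unfolding A_def w_def by (rule mult_mat_vec_split[OF W R a x2])
    then have "w \<bullet> (A *\<^sub>v w) = (a @\<^sub>v x2) \<bullet> (W *\<^sub>v a @\<^sub>v Rsum Rs *\<^sub>v x2)" unfolding w_def by simp
    also have "\<dots> = a \<bullet> (W *\<^sub>v a) + x2 \<bullet> (Rsum Rs *\<^sub>v x2)"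
      by (rule scalar_prod_append[OF a x2]) (use W R a x2 in auto)
    finally show ?thesis .
  qed
  have wv: "w \<bullet> v = row Z i \<bullet> a + row J i \<bullet> x2"
  proof -
    have "w \<bullet> v = a \<bullet> row Z i + x2 \<bullet> row J i"
      unfolding w_def v_def by (rule scalar_prod_append[OF a x2]) (use Z J i in auto)
    also have "\<dots> = row Z i \<bullet> a + row J i \<bullet> x2"
      using comm_scalar_prod[OF a, of "row Z i"] comm_scalar_prod[OF x2, of "row J i"] Z J i by auto
    finally show ?thesis .
  qed
  have "(w @\<^sub>v tv) \<bullet> (four_block_mat A B C D *\<^sub>v (w @\<^sub>v tv))
      = w \<bullet> (A *\<^sub>v w + B *\<^sub>v tv) + tv \<bullet> (C *\<^sub>v w + D *\<^sub>v tv)"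
    unfolding mv by (rule scalar_prod_append[OF w tv]) (use A Bc Cc Dc w tv in auto)
  also have "\<dots> = w \<bullet> (A *\<^sub>v w) + w \<bullet> (B *\<^sub>v tv) + (tv \<bullet> (C *\<^sub>v w) + tv \<bullet> (D *\<^sub>v tv))"
    using A Bc Cc Dc w tv by (simp add: scalar_prod_add_distrib)
  also have "\<dots> = a \<bullet> (W *\<^sub>v a) + x2 \<bullet> (Rsum Rs *\<^sub>v x2) + 2*t*(row Z i \<bullet> a + row J i \<bullet> x2) + t*t*(u\<^sup>2/\<mu>)"
    unfolding Aw Btv Cw Dtv wv[symmetric] using w dv by simp
  finally show ?thesis unfolding M w_def tv_def .
qed

theorem lemma3:
  fixes n m q :: nat and ns :: "nat list" and ubar :: "nat \<Rightarrow> real" and T2 :: "nat \<Rightarrow> real"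
    and \<mu> :: real and \<sigma> :: "nat \<Rightarrow> real" and Rs :: "real mat list" and W Z J :: "real mat"
  assumes "n \<ge> 1" and "m \<ge> 1" and "1 \<le> q" and "q \<le> n"
    and "length ns = q" and "\<forall>i<q. ns ! i \<ge> 1" and "sum_list ns = n"
    and "\<forall>i<m. ubar i > 0"
    and "\<forall>i<q. T2 i > 0"
    and "\<mu> > 0" and "\<forall>i<q. \<sigma> i > 0"
    and "length Rs = q" and "\<forall>i<q. pd_mat (ns ! i) (Rs ! i)"
    and "pd_mat n W"
    and "Z \<in> carrier_mat m n" and "J \<in> carrier_mat m n"
    and "\<forall>i<m. psd_mat (LMI_mat W Rs Z J (ubar i) \<mu> i)"
  shows "Qset n q T2 W Rs \<sigma> \<mu> \<subseteq> Lset n m (Lmat Z W J) ubar \<times> Tset q T2"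
proof (intro subsetI)
  fix p assume "p \<in> Qset n q T2 W Rs \<sigma> \<mu>"
  then obtain x \<tau> where p: "p = (x, \<tau>)" and x: "x \<in> carrier_vec (2*n)" and \<tau>: "\<tau> \<in> Tset q T2"
    and Q: "x \<bullet> (Phat W Rs \<sigma> \<tau> *\<^sub>v x) \<le> \<mu>" unfolding Qset_def by auto
  define Wi where "Wi = mat_inv W"
  have Wc: "W \<in> carrier_mat n n" using assms(14) unfolding pd_mat_def by auto
  have Wi: "Wi \<in> carrier_mat n n" "W * Wi = 1\<^sub>m n" "Wi * W = 1\<^sub>m n"
    using pd_inv[OF assms(14)] unfolding Wi_def by auto
  define Bt where "Bt = map (\<lambda>i. exp (\<sigma> i * \<tau> i) \<cdot>\<^sub>m (Rs ! i)) [0..<length Rs]"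
  have Rt_eq: "Rtau Rs \<sigma> \<tau> = diag_block_mat Bt" unfolding Rtau_def Bt_def ..
  have Rs_eq: "Rsum Rs = diag_block_mat Rs" unfolding Rsum_def ..
  have Rsc: "\<And>i. i < q \<Longrightarrow> Rs ! i \<in> carrier_mat (ns ! i) (ns ! i)"
    using assms(13) unfolding pd_mat_def by auto
  have mapdim: "map dim_row Rs = ns"
    by (rule nth_equalityI) (use assms(5,12) Rsc in auto)
  have sumdim: "sum_list (map dim_row Rs) = n" using mapdim assms(7) by simp
  have \<tau>0: "0 \<le> \<tau> i" if "i < q" for i using PiE_mem[OF \<tau>[unfolded Tset_def], of i] that by simp
  have mono: "diag_block_mat Rs \<in> carrier_mat (sum_list (map dim_row Rs)) (sum_list (map dim_row Rs))
    \<and> diag_block_mat Bt \<in> carrier_mat (sum_list (map dim_row Rs)) (sum_list (map dim_row Rs))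
    \<and> (\<forall>y\<in>carrier_vec (sum_list (map dim_row Rs)).
         y \<bullet> (diag_block_mat Rs *\<^sub>v y) \<le> y \<bullet> (diag_block_mat Bt *\<^sub>v y))"
  proof (rule diag_block_mono)
    show "length Rs = length Bt" unfolding Bt_def by simp
    show "\<forall>i<length Rs. Rs ! i \<in> carrier_mat (dim_row (Rs ! i)) (dim_row (Rs ! i)) \<and>
        Bt ! i \<in> carrier_mat (dim_row (Rs ! i)) (dim_row (Rs ! i)) \<and>
        (\<forall>y\<in>carrier_vec (dim_row (Rs ! i)). y \<bullet> (Rs ! i *\<^sub>v y) \<le> y \<bullet> (Bt ! i *\<^sub>v y))"
    proof (intro allI impI conjI ballI)
      fix i assume i: "i < length Rs"
      then have iq: "i < q" using assms(12) by simp
      have Ri: "Rs ! i \<in> carrier_mat (ns ! i) (ns ! i)" using Rsc[OF iq] .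
      then have dr: "dim_row (Rs ! i) = ns ! i" by simp
      have Bi: "Bt ! i = exp (\<sigma> i * \<tau> i) \<cdot>\<^sub>m (Rs ! i)" unfolding Bt_def using i by simp
      show "Rs ! i \<in> carrier_mat (dim_row (Rs ! i)) (dim_row (Rs ! i))" using Ri dr by simp
      show "Bt ! i \<in> carrier_mat (dim_row (Rs ! i)) (dim_row (Rs ! i))" using Ri dr Bi by simp
      fix y :: "real vec" assume y: "y \<in> carrier_vec (dim_row (Rs ! i))"
      then have y': "y \<in> carrier_vec (ns ! i)" using dr by simp
      have nn: "0 \<le> y \<bullet> (Rs ! i *\<^sub>v y)"
      proof (cases "y = 0\<^sub>v (ns ! i)")
        case True then show ?thesis using Ri by simp
      next
        case False then show ?thesis using assms(13) iq y' unfolding pd_mat_def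
          by (auto intro: less_imp_le)
      qed
      have "0 \<le> \<sigma> i * \<tau> i" using assms(11) \<tau>0[OF iq] iq by (simp add: less_imp_le)
      then have c1: "1 \<le> exp (\<sigma> i * \<tau> i)" by simp
      have "y \<bullet> (Bt ! i *\<^sub>v y) = exp (\<sigma> i * \<tau> i) * (y \<bullet> (Rs ! i *\<^sub>v y))"
        unfolding Bi using Ri y' by (simp add: smult_mat_vec)
      also have "\<dots> \<ge> y \<bullet> (Rs ! i *\<^sub>v y)" using c1 nn by (simp add: mult_le_cancel_right1)
      finally show "y \<bullet> (Rs ! i *\<^sub>v y) \<le> y \<bullet> (Bt ! i *\<^sub>v y)" .
    qed
  qed
  have Rsumc: "Rsum Rs \<in> carrier_mat n n" using mono Rs_eq sumdim by simp
  have Rtc: "Rtau Rs \<sigma> \<tau> \<in> carrier_mat n n" using mono Rt_eq sumdim by simp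
  have Rle: "\<And>y. y \<in> carrier_vec n \<Longrightarrow> y \<bullet> (Rsum Rs *\<^sub>v y) \<le> y \<bullet> (Rtau Rs \<sigma> \<tau> *\<^sub>v y)"
    using mono Rs_eq Rt_eq sumdim by simp
  define x1 where "x1 = vec_first x n"
  define x2 where "x2 = vec_last x n"
  have x1: "x1 \<in> carrier_vec n" and x2: "x2 \<in> carrier_vec n" unfolding x1_def x2_def by auto
  have xnn: "x \<in> carrier_vec (n+n)" using x by (simp add: mult_2)
  have xe: "x = x1 @\<^sub>v x2" using xnn unfolding x1_def x2_def by simp
  have Phat_eq: "Phat W Rs \<sigma> \<tau> = four_block_mat Wi (0\<^sub>m n n) (0\<^sub>m n n) (Rtau Rs \<sigma> \<tau>)"
    unfolding Phat_def Let_def Wi_def[symmetric] using Wi Rtc by simp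
  have Qsplit: "x1 \<bullet> (Wi *\<^sub>v x1) + x2 \<bullet> (Rtau Rs \<sigma> \<tau> *\<^sub>v x2) \<le> \<mu>"
    using Q unfolding Phat_eq quad_split[OF Wi(1) Rtc xnn] x1_def x2_def .
  define a where "a = Wi *\<^sub>v x1"
  have a: "a \<in> carrier_vec n" unfolding a_def using Wi x1 by simp
  have aWa: "a \<bullet> (W *\<^sub>v a) = x1 \<bullet> (Wi *\<^sub>v x1)"
  proof -
    have "W *\<^sub>v a = x1" unfolding a_def using assoc_mult_mat_vec[OF Wc Wi(1) x1, symmetric] Wi(2) x1
      by simp
    then show ?thesis using comm_scalar_prod[OF a x1] unfolding a_def by simp
  qed
  have "x \<in> Lset n m (Lmat Z W J) ubar"
    unfolding Lset_def
  proof (intro CollectI conjI allI impI x)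
    fix i assume i: "i < m"
    have ZWi: "Z * Wi \<in> carrier_mat m n" using assms(15) Wi by simp
    have Jc: "J \<in> carrier_mat m n" by (rule assms(16))
    have rowL: "row (Lmat Z W J) i = row (Z * Wi) i @\<^sub>v row J i"
      unfolding Lmat_def Wi_def[symmetric]
      using row_four_block_mat(1)[OF ZWi Jc, of "0\<^sub>m 0 (dim_row W)" 0 "0\<^sub>m 0 (dim_col J)"] i Wc Jc by simp
    have r1: "row (Z * Wi) i \<bullet> x1 = row Z i \<bullet> a"
    proof -
      have "row (Z * Wi) i \<bullet> x1 = ((Z * Wi) *\<^sub>v x1) $ i" using i ZWi assms(15) by (simp add: mult_mat_vec_def)
      also have "\<dots> = (Z *\<^sub>v a) $ i" unfolding a_def using assms(15) Wi x1 by simp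
      also have "\<dots> = row Z i \<bullet> a" using i assms(15) by (simp add: mult_mat_vec_def)
      finally show ?thesis .
    qed
    have "row (Lmat Z W J) i \<bullet> x = row (Z * Wi) i \<bullet> x1 + row J i \<bullet> x2"
      unfolding rowL xe by (rule scalar_prod_append[OF _ _ x1 x2]) (use ZWi Jc i in auto)
    then have sx: "row (Lmat Z W J) i \<bullet> x = row Z i \<bullet> a + row J i \<bullet> x2" unfolding r1 .
    have psd: "psd_mat (LMI_mat W Rs Z J (ubar i) \<mu> i)" using assms(17) i by simp
    have dimM: "dim_row (LMI_mat W Rs Z J (ubar i) \<mu> i) = n + n + 1"
      unfolding LMI_mat_def Let_def using Wc Rsumc by simp
    have ineq: "\<And>t. 0 \<le> (x1 \<bullet> (Wi *\<^sub>v x1) + x2 \<bullet> (Rsum Rs *\<^sub>v x2)) + 2*t*(row Z i \<bullet> a + row J i \<bullet> x2)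
        + t*t*((ubar i)\<^sup>2/\<mu>)"
    proof -
      fix t
      have y: "(a @\<^sub>v x2) @\<^sub>v vec 1 (\<lambda>_. t) \<in> carrier_vec (dim_row (LMI_mat W Rs Z J (ubar i) \<mu> i))"
        unfolding dimM by (intro append_carrier_vec a x2) auto
      have "0 \<le> ((a @\<^sub>v x2) @\<^sub>v vec 1 (\<lambda>_. t)) \<bullet> (LMI_mat W Rs Z J (ubar i) \<mu> i *\<^sub>v ((a @\<^sub>v x2) @\<^sub>v vec 1 (\<lambda>_. t)))"
        using psd y unfolding psd_mat_def by blast
      also have "\<dots> = a \<bullet> (W *\<^sub>v a) + x2 \<bullet> (Rsum Rs *\<^sub>v x2) + 2*t*(row Z i \<bullet> a + row J i \<bullet> x2) + t*t*((ubar i)\<^sup>2/\<mu>)"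
        by (rule lmi_quad[OF Wc Rsumc assms(15,16) i a x2])
      finally show "?thesis t" unfolding aWa .
    qed
    have cle: "x1 \<bullet> (Wi *\<^sub>v x1) + x2 \<bullet> (Rsum Rs *\<^sub>v x2) \<le> \<mu>"
      using Qsplit Rle[OF x2] by simp
    have up: "ubar i > 0" using assms(8) i by simp
    have "\<bar>row Z i \<bullet> a + row J i \<bullet> x2\<bar> \<le> ubar i"
      by (rule quad_bound[OF cle assms(10) up ineq])
    then show "\<bar>row (Lmat Z W J) i \<bullet> x\<bar> \<le> ubar i" unfolding sx .
  qed
  then show "p \<in> Lset n m (Lmat Z W J) ubar \<times> Tset q T2" using p \<tau> by simp
qed


end
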